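(* Let $\nu$ be a Lévy measure concentrated on $\mathbb{Z}^n\setminus\{\mathbf{0}\}$ with $\int_{\mathbb{R}^n}\min(1,\|\mathbf{y}\|)\nu(d\mathbf{y})<\infty$, let $N$ be a homogeneous Poisson random measure on $\mathbb{R}^n\times[0,1]\times\mathbb{R}$ with intensity $\nu(d\mathbf{y})\,dx\,ds$, and $\mathbf{L}=(L^{(1)},\dots,L^{(n)})^\top$, $\mathbf{L}(dx,ds)=\int_{\mathbb{R}^n}\mathbf{y}\,N(d\mathbf{y},dx,ds)$. Fix $i\in\{1,\dots,n\}$ and let $d^{(i)}:(-\infty,0]\to[0,1]$ be continuous with $\int_{-\infty}^0d^{(i)}(s)\,ds<\infty$. Then $$X^{(i)}_{0,t}:=L^{(i)}\big(\{(x,s):s\le0,\ 0\le x\le d^{(i)}(s-t)\}\big)\to0\quad\text{in probability as }t\to\infty.$$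
   Context: $X^{(i)}_{0,t}$ is the contribution, to the $i$-th component $Y^{(i)}_t=L^{(i)}(\{(x,s):s\le t,\ 0\le x\le d^{(i)}(s-t)\})$ of the trawl process, coming from the part of the trawl lying at times $s\le0$. *)

theory Defs
  imports "HOL-Probability.Probability"
begin

definition levy_measure :: "(real ^ 'n) measure \<Rightarrow> bool" where
  "levy_measure \<nu> \<longleftrightarrow> sets \<nu> = sets borel \<and> emeasure \<nu> {0} = 0 \<and>
     (\<integral>\<^sup>+ y. ennreal (min 1 ((norm y)\<^sup>2)) \<partial>\<nu>) < \<infinity>"

definition int_lattice :: "(real ^ 'n) set" where
  "int_lattice = {y. \<forall>j. y $ j \<in> \<int>}"

definition poisson_random_measure :: "'w measure \<Rightarrow> 's measure \<Rightarrow> ('w \<Rightarrow> 's measure) \<Rightarrow> bool" where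
  "poisson_random_measure M \<mu> N \<longleftrightarrow>
     prob_space M \<and>
     (\<forall>\<omega>\<in>space M. sets (N \<omega>) = sets \<mu>) \<and>
     (\<forall>B\<in>sets \<mu>. (\<lambda>\<omega>. emeasure (N \<omega>) B) \<in> borel_measurable M) \<and>
     (\<forall>B\<in>sets \<mu>. emeasure \<mu> B < \<infinity> \<longrightarrow>
        (\<forall>k::nat. measure M {\<omega>\<in>space M. emeasure (N \<omega>) B = of_nat k} =
           enn2real (emeasure \<mu> B) ^ k / fact k * exp (- enn2real (emeasure \<mu> B)))) \<and>
     (\<forall>B\<in>sets \<mu>. emeasure \<mu> B = \<infinity> \<longrightarrow>
        measure M {\<omega>\<in>space M. emeasure (N \<omega>) B = \<infinity>} = 1) \<and>
     (\<forall>(B :: nat \<Rightarrow> 's set) J. finite J \<longrightarrow> B ` J \<subseteq> sets \<mu> \<longrightarrow> disjoint_family_on B J \<longrightarrow>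
        prob_space.indep_vars M (\<lambda>_. borel) (\<lambda>j \<omega>. emeasure (N \<omega>) (B j)) J)"

definition trawl_intensity :: "(real ^ 'n) measure \<Rightarrow> ((real ^ 'n) \<times> real \<times> real) measure" where
  "trawl_intensity \<nu> = \<nu> \<Otimes>\<^sub>M (restrict_space lborel {0..1} \<Otimes>\<^sub>M lborel)"

definition levy_basis_comp :: "('w \<Rightarrow> ((real ^ 'n) \<times> real \<times> real) measure) \<Rightarrow> 'n \<Rightarrow>
    (real \<times> real) set \<Rightarrow> 'w \<Rightarrow> real" where
  "levy_basis_comp N i A \<omega> = (\<integral> z. indicator A (snd z) * (fst z $ i) \<partial>(N \<omega>))"

definition past_trawl_set :: "(real \<Rightarrow> real) \<Rightarrow> real \<Rightarrow> (real \<times> real) set" where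
  "past_trawl_set d t = {(x, s). s \<le> 0 \<and> 0 \<le> x \<and> x \<le> d (s - t)}"

end

theory Submission
  imports Defs
begin

lemma lattice_closed: "closed (int_lattice :: (real^'n) set)"
proof -
  have eq: "(int_lattice :: (real^'n) set) = (\<Inter>j. (\<lambda>y::real^'n. y $ j) -` \<int>)"
    by (auto simp: int_lattice_def)
  have cl: "closed ((\<lambda>y::real^'n. y $ j) -` \<int>)" for j
    by (intro closed_vimage closed_Ints) (intro continuous_intros)
  show ?thesis unfolding eq by (rule closed_INT) (use cl in auto)
qed

lemma lattice_norm: "y \<in> int_lattice - {0} \<Longrightarrow> 1 \<le> norm (y::real^'n)"
proof -
  assume y: "y \<in> int_lattice - {0}"
  then obtain j where j: "y $ j \<noteq> 0" by (metis DiffE insertCI vec_eq_iff zero_index)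
  from y have "y $ j \<in> \<int>" by (auto simp: int_lattice_def)
  then obtain k where k: "y $ j = of_int k" by (auto elim: Ints_cases)
  with j have "k \<noteq> 0" by auto
  then have "1 \<le> \<bar>y $ j\<bar>" using k by simp
  also have "\<dots> \<le> norm y" by (rule component_le_norm_cart)
  finally show ?thesis .
qed

lemma tail_lim:
  fixes g :: "real \<Rightarrow> real"
  assumes "integrable lborel g"
  shows "((\<lambda>t. LINT u|lborel. indicator {..-t} u * g u) \<longlongrightarrow> 0) at_top"
proof -
  have "((\<lambda>t. LINT u|lborel. indicator {..-t} u * g u) \<longlongrightarrow> (LINT (u::real)|lborel. (0::real))) at_top"
  proof (rule integral_dominated_convergence_at_top[where w="\<lambda>u. norm (g u)" and s="\<lambda>t u. indicator {..-t} u * g u" and f="\<lambda>u. 0"])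
    show "(\<lambda>u. 0::real) \<in> borel_measurable lborel" by simp
    show "(\<lambda>u. indicator {..-t} u * g u) \<in> borel_measurable lborel" for t
      using assms by measurable
    show "integrable lborel (\<lambda>u. norm (g u))" using assms by simp
    show "AE x in lborel. ((\<lambda>t. indicator {..-t} x * g x) \<longlongrightarrow> 0) at_top"
    proof (rule AE_I2)
      fix x
      have "eventually (\<lambda>t. indicator {..-t} x * g x = 0) at_top"
        using eventually_gt_at_top[of "-x"] by eventually_elim (auto simp: indicator_def)
      then show "((\<lambda>t. indicator {..-t} x * g x) \<longlongrightarrow> 0) at_top"
        by (rule tendsto_eventually)
    qed
    show "\<forall>\<^sub>F t in at_top. AE x in lborel. norm (indicator {..-t} x * g x) \<le> norm (g x)"
      by (auto simp: indicator_def)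
  qed
  then show ?thesis by simp
qed


theorem proposition6:
  fixes M :: "'w measure"
    and \<nu> :: "(real ^ 'n) measure"
    and N :: "'w \<Rightarrow> ((real ^ 'n) \<times> real \<times> real) measure"
    and i :: 'n
    and d :: "real \<Rightarrow> real"
  assumes levy: "levy_measure \<nu>"
    and conc: "emeasure \<nu> (UNIV - (int_lattice - {0})) = 0"
    and int1: "(\<integral>\<^sup>+ y. ennreal (min 1 (norm y)) \<partial>\<nu>) < \<infinity>"
    and prm: "poisson_random_measure M (trawl_intensity \<nu>) N"
    and d_cont: "continuous_on {..0} d"
    and d_range: "\<And>s. s \<le> 0 \<Longrightarrow> d s \<in> {0..1}"
    and d_int: "set_integrable lborel {..0} d"
  shows "\<forall>\<epsilon>>0. \<exists>E. (\<forall>t. E t \<in> sets M \<and>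
            {\<omega>\<in>space M. \<epsilon> < \<bar>levy_basis_comp N i (past_trawl_set d t) \<omega>\<bar>} \<subseteq> E t) \<and>
          ((\<lambda>t. measure M (E t)) \<longlongrightarrow> 0) at_top"
proof (intro allI impI)
  fix \<epsilon> :: real assume "\<epsilon> > 0"
  define \<mu> where "\<mu> = trawl_intensity \<nu>"
  define R where "R = restrict_space lborel {0..1::real}"
  define P2 where "P2 = R \<Otimes>\<^sub>M (lborel::real measure)"
  define A where "A t = past_trawl_set d t" for t
  define B where "B t = (UNIV :: (real^'n) set) \<times> A t" for t
  define g where "g u = indicator {..0} u * d u" for u :: real
  have g_int: "integrable lborel g" using d_int unfolding g_def[abs_def] by (simp add: set_integrable_def)
  have g_nn: "0 \<le> g u" for u using d_range[of u] by (auto simp: g_def indicator_def)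
  define F where "F t = (LINT u|lborel. indicator {..-t} u * g u)" for t
  have F_lim: "(F \<longlongrightarrow> 0) at_top" using tail_lim[OF g_int] unfolding F_def[abs_def] .
  have F_nn: "0 \<le> F t" for t unfolding F_def using g_nn by (intro integral_nonneg_AE) (auto simp: indicator_def)
  have \<mu>_def': "\<mu> = \<nu> \<Otimes>\<^sub>M P2" by (simp add: \<mu>_def P2_def R_def trawl_intensity_def)

  from prm have Mprob: "prob_space M"
    and Nsets: "\<And>\<omega>. \<omega> \<in> space M \<Longrightarrow> sets (N \<omega>) = sets \<mu>"
    and Nmeas: "\<And>B. B \<in> sets \<mu> \<Longrightarrow> (\<lambda>\<omega>. emeasure (N \<omega>) B) \<in> borel_measurable M"
    and Npois: "\<And>B k. B \<in> sets \<mu> \<Longrightarrow> emeasure \<mu> B < \<infinity> \<Longrightarrow>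
        measure M {\<omega>\<in>space M. emeasure (N \<omega>) B = of_nat k} =
           enn2real (emeasure \<mu> B) ^ k / fact k * exp (- enn2real (emeasure \<mu> B))"
    unfolding poisson_random_measure_def \<mu>_def by blast+
  interpret M: prob_space M by (rule Mprob)

  have sets_nu: "sets \<nu> = sets borel" using levy by (simp add: levy_measure_def)
  have sp_nu: "space \<nu> = UNIV" using sets_eq_imp_space_eq[OF sets_nu] by simp

  have nu_fin: "emeasure \<nu> UNIV < \<infinity>"
  proof -
    have "(int_lattice::(real^'n) set) \<in> sets borel" using lattice_closed by (rule borel_closed)
    then have Lm: "int_lattice - {0} \<in> sets \<nu>" using sets_nu by auto
    then have "UNIV - (int_lattice - {0}) \<in> sets \<nu>" using sp_nu sets.compl_sets[of "int_lattice - {0}" \<nu>] by simp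
    then have null: "UNIV - (int_lattice - {0}) \<in> null_sets \<nu>" using conc by (simp add: null_sets_def)
    have AE: "AE y in \<nu>. y \<in> int_lattice - {0}" by (rule AE_I'[OF null]) auto
    have "emeasure \<nu> UNIV = (\<integral>\<^sup>+ y. 1 \<partial>\<nu>)" using sp_nu by simp
    also have "\<dots> \<le> (\<integral>\<^sup>+ y. ennreal (min 1 (norm y)) \<partial>\<nu>)"
      by (rule nn_integral_mono_AE) (use AE lattice_norm in auto)
    finally show ?thesis using int1 by simp
  qed
  interpret nu: finite_measure \<nu> using nu_fin sp_nu by (intro finite_measureI) auto
  interpret R: sigma_finite_measure R unfolding R_def
    by (rule sigma_finite_measure_restrict_space) (auto intro: lborel.sigma_finite_measure_axioms)
  interpret RL: pair_sigma_finite R lborel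
    by (intro pair_sigma_finite.intro R.sigma_finite_measure_axioms lborel.sigma_finite_measure_axioms)
  interpret P2: sigma_finite_measure P2 unfolding P2_def
    by (intro sigma_finite_pair_measure R.sigma_finite_measure_axioms lborel.sigma_finite_measure_axioms)

  have A_sets: "A t \<in> sets P2" if "0 \<le> t" for t
  proof -
    define dd where "dd s = d (min 0 s)" for s
    have dd_cont: "continuous_on UNIV dd" unfolding dd_def
      by (rule continuous_on_compose2[OF d_cont]) (auto intro: continuous_intros)
    have [measurable]: "dd \<in> borel_measurable borel" by (rule borel_measurable_continuous_onI[OF dd_cont])
    have "A t = {z \<in> space P2. snd z \<le> 0 \<and> 0 \<le> fst z \<and> fst z \<le> dd (snd z - t)}"
    proof (intro set_eqI iffI)
      fix z assume "z \<in> A t"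
      then obtain x s where z: "z = (x, s)" "s \<le> 0" "0 \<le> x" "x \<le> d (s - t)"
        by (auto simp: A_def past_trawl_set_def)
      have "d (s - t) \<le> 1" using d_range[of "s - t"] z that by auto
      moreover have "min 0 (s - t) = s - t" using z that by auto
      ultimately show "z \<in> {z \<in> space P2. snd z \<le> 0 \<and> 0 \<le> fst z \<and> fst z \<le> dd (snd z - t)}"
        using z by (simp add: dd_def P2_def R_def space_pair_measure)
    next
      fix z assume z: "z \<in> {z \<in> space P2. snd z \<le> 0 \<and> 0 \<le> fst z \<and> fst z \<le> dd (snd z - t)}"
      then have "min 0 (snd z - t) = snd z - t" using that by auto
      with z show "z \<in> A t" by (cases z) (simp add: dd_def A_def past_trawl_set_def)
    qed
    also have "\<dots> \<in> sets P2"
    proof -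
      have m1: "(\<lambda>x::real. x) \<in> borel_measurable R" unfolding R_def by (intro measurable_restrict_space1) simp
      have [measurable]: "fst \<in> borel_measurable P2" unfolding P2_def using measurable_compose[OF measurable_fst m1, of lborel] by (simp add: o_def)
      have m2: "(\<lambda>x::real. x) \<in> borel_measurable lborel" by simp
      have [measurable]: "snd \<in> borel_measurable P2" unfolding P2_def using measurable_compose[OF measurable_snd m2, of R] by (simp add: o_def)
      show ?thesis by measurable
    qed
    finally show ?thesis .
  qed
  have A_meas: "emeasure P2 (A t) = ennreal (F t)" if "0 \<le> t" for t
  proof -
    have "emeasure P2 (A t) = (\<integral>\<^sup>+s. emeasure R ((\<lambda>x. (x, s)) -` A t) \<partial>lborel)"
      unfolding P2_def by (rule RL.emeasure_pair_measure_alt2) (use A_sets[OF that] in \<open>simp only: P2_def\<close>)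
    also have "\<dots> = (\<integral>\<^sup>+s. ennreal (indicator {..0} s * d (s - t)) \<partial>lborel)"
    proof (rule nn_integral_cong)
      fix s :: real
      show "emeasure R ((\<lambda>x. (x, s)) -` A t) = ennreal (indicator {..0} s * d (s - t))"
      proof (cases "s \<le> 0")
        case True
        then have dr: "d (s - t) \<in> {0..1}" using d_range that by auto
        have "(\<lambda>x. (x, s)) -` A t = {0..d (s - t)}" using True by (auto simp: A_def past_trawl_set_def)
        moreover have "emeasure R {0..d (s - t)} = emeasure lborel {0..d (s - t)}"
          unfolding R_def by (rule emeasure_restrict_space) (use dr in auto)
        ultimately show ?thesis using True dr by simp
      next
        case False
        then have "(\<lambda>x. (x, s)) -` A t = {}" by (auto simp: A_def past_trawl_set_def)
        then show ?thesis using False by simp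
      qed
    qed
    also have "\<dots> = (\<integral>\<^sup>+u. ennreal (indicator {..-t} u * g u) \<partial>lborel)"
    proof -
      have "(\<integral>\<^sup>+u. ennreal (indicator {..-t} u * g u) \<partial>lborel)
          = ennreal \<bar>1::real\<bar> * (\<integral>\<^sup>+x. ennreal (indicator {..-t} (-t + 1 * x) * g (-t + 1 * x)) \<partial>lborel)"
      proof (rule nn_integral_real_affine[where c=1 and t="-t"])
        have [measurable]: "g \<in> borel_measurable borel" using borel_measurable_integrable[OF g_int] by simp
        show "(\<lambda>u. ennreal (indicator {..-t} u * g u)) \<in> borel_measurable borel" by measurable
      qed simp
      also have "\<dots> = (\<integral>\<^sup>+s. ennreal (indicator {..0} s * d (s - t)) \<partial>lborel)"
      proof -
        have "(\<integral>\<^sup>+x. ennreal (indicator {..-t} (-t + 1 * x) * g (-t + 1 * x)) \<partial>lborel) = (\<integral>\<^sup>+s. ennreal (indicator {..0} s * d (s - t)) \<partial>lborel)"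
          using that by (intro nn_integral_cong) (auto simp: g_def indicator_def)
        then show ?thesis by simp
      qed
      finally show ?thesis by simp
    qed
    also have "\<dots> = ennreal (F t)" unfolding F_def
      by (rule nn_integral_eq_integral) (use g_int g_nn integrable_mult_indicator[of "{..-t}" lborel g] in auto)
    finally show ?thesis .
  qed
  have B_sets: "B t \<in> sets \<mu>" if "0 \<le> t" for t
    unfolding B_def \<mu>_def' using A_sets[OF that] sp_nu by (intro pair_measureI) (auto simp: sets.top[of \<nu>, simplified sp_nu])
  have B_meas: "emeasure \<mu> (B t) = emeasure \<nu> UNIV * ennreal (F t)" if "0 \<le> t" for t
    unfolding B_def \<mu>_def' using A_sets[OF that] sp_nu A_meas[OF that]
    by (subst P2.emeasure_pair_measure_Times) (auto simp: sets.top[of \<nu>, simplified sp_nu])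
  define c where "c = enn2real (emeasure \<nu> UNIV)"
  have c_eq: "emeasure \<nu> UNIV = ennreal c" using nu_fin by (simp add: c_def ennreal_enn2real_if)
  have c_nn: "0 \<le> c" by (simp add: c_def)
  have B_fin: "emeasure \<mu> (B t) < \<infinity>" if "0 \<le> t" for t
    using B_meas[OF that] c_eq by (simp add: ennreal_mult'[symmetric] c_nn)
  have m_eq: "enn2real (emeasure \<mu> (B t)) = c * F t" if "0 \<le> t" for t
    using B_meas[OF that] c_eq c_nn F_nn by (simp add: ennreal_mult'[symmetric])

  have X0: "levy_basis_comp N i (A t) \<omega> = 0"
    if "0 \<le> t" "\<omega> \<in> space M" "emeasure (N \<omega>) (B t) = 0" for t \<omega>
  proof -
    have "B t \<in> null_sets (N \<omega>)" using that B_sets[OF that(1)] Nsets[OF that(2)] by (simp add: null_sets_def)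
    then have "AE z in N \<omega>. indicator (A t) (snd z) * (fst z $ i) = 0"
      by (rule AE_I') (auto simp: B_def indicator_def)
    then show ?thesis unfolding levy_basis_comp_def by (rule integral_eq_zero_AE)
  qed

  define E where "E t = (if 0 \<le> t then space M - {\<omega>\<in>space M. emeasure (N \<omega>) (B t) = of_nat 0} else space M)" for t
  show "\<exists>E. (\<forall>t. E t \<in> sets M \<and>
            {\<omega>\<in>space M. \<epsilon> < \<bar>levy_basis_comp N i (past_trawl_set d t) \<omega>\<bar>} \<subseteq> E t) \<and>
          ((\<lambda>t. measure M (E t)) \<longlongrightarrow> 0) at_top"
  proof (intro exI conjI allI)
    fix t :: real
    have S: "{\<omega>\<in>space M. emeasure (N \<omega>) (B t) = of_nat 0} \<in> sets M" if "0 \<le> t"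
    proof -
      have [measurable]: "(\<lambda>\<omega>. emeasure (N \<omega>) (B t)) \<in> borel_measurable M" by (rule Nmeas[OF B_sets[OF that]])
      show ?thesis by measurable
    qed
    then show "E t \<in> sets M" by (auto simp: E_def)
    show "{\<omega>\<in>space M. \<epsilon> < \<bar>levy_basis_comp N i (past_trawl_set d t) \<omega>\<bar>} \<subseteq> E t"
      using X0[of t] \<open>\<epsilon> > 0\<close> by (auto simp: E_def A_def)
  next
    have ev: "eventually (\<lambda>t. measure M (E t) = 1 - exp (- (c * F t))) at_top"
      using eventually_ge_at_top[of 0]
    proof eventually_elim
      case (elim t)
      have [measurable]: "(\<lambda>\<omega>. emeasure (N \<omega>) (B t)) \<in> borel_measurable M" by (rule Nmeas[OF B_sets[OF elim]])
      have S: "{\<omega>\<in>space M. emeasure (N \<omega>) (B t) = of_nat 0} \<in> sets M" by measurable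
      have "measure M (E t) = 1 - measure M {\<omega>\<in>space M. emeasure (N \<omega>) (B t) = of_nat 0}"
        using elim M.prob_compl[OF S] by (simp add: E_def)
      also have "\<dots> = 1 - exp (- (c * F t))"
        using Npois[OF B_sets[OF elim] B_fin[OF elim], of 0] m_eq[OF elim] by simp
      finally show ?case .
    qed
    have "((\<lambda>t. 1 - exp (- (c * F t))) \<longlongrightarrow> 1 - exp (- (c * 0))) at_top"
      by (intro tendsto_intros F_lim)
    then have lim: "((\<lambda>t. 1 - exp (- (c * F t))) \<longlongrightarrow> 0) at_top" by simp
    show "((\<lambda>t. measure M (E t)) \<longlongrightarrow> 0) at_top"
      using tendsto_cong[OF ev, of 0] lim by simp
  qed
qed

end
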